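(* Let $m\ge1$, $k\ge 1$, and let $p_1,\dots,p_m$ be probabilities summing to $1$; for a word $S$ on $[m]$ let $E(S)$ be the expected number of independent rolls of a die showing face $j$ with probability $p_j$ until $S$ first appears as a block of consecutive outcomes. (i) Suppose all $p_j>0$, and let $p=\min\{p_1,\dots,p_m\}=p_i$. Then \[ \max\{E(S): S\in[m]^k\} = p^{-1}+p^{-2}+\cdots+p^{-k} = \frac{1-p^k}{(1-p)p^k}, \] and the maximum is attained by $S=i^k$ (the run of $k$ copies of $i$). (ii) If $m>1$ and $p_1=\cdots=p_m$, then $\min\{E(S):S\in[m]^k\}=m^k$, and this minimum is attained by every $S\in[m]^k$ whose only overlap is $S$ itself, for example any word consisting of exactly two maximal runs of letters.
   Context: An overlap of $S$ is a nonempty word that is both a prefix and a suffix of $S$ (including $S$ itself). $[m]^k$ is the set of words of length $k$ on $[m]=\{1,\dots,m\}$. *)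

theory Defs
  imports "HOL-Probability.Probability" "HOL-Library.Sublist"
begin

text \<open>Number of rolls (outcomes omega!!0, omega!!1, ...) until the word S first appears
  as a block of consecutive outcomes; infinity if it never appears.\<close>
definition waiting_time :: "nat list \<Rightarrow> nat stream \<Rightarrow> ennreal" where
  "waiting_time S \<omega> =
     (if \<exists>n. length S \<le> n \<and> stake (length S) (sdrop (n - length S) \<omega>) = S
      then of_nat (LEAST n. length S \<le> n \<and> stake (length S) (sdrop (n - length S) \<omega>) = S)
      else \<infinity>)"

definition expected_wait :: "nat pmf \<Rightarrow> nat list \<Rightarrow> ennreal" where
  "expected_wait D S = (\<integral>\<^sup>+ \<omega>. waiting_time S \<omega> \<partial>(stream_space (measure_pmf D)))"

definition words :: "nat \<Rightarrow> nat \<Rightarrow> nat list set" where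
  "words m k = {S. length S = k \<and> set S \<subseteq> {1..m}}"

definition overlaps :: "'a list \<Rightarrow> 'a list set" where
  "overlaps S = {w. w \<noteq> [] \<and> prefix w S \<and> suffix w S}"

end

theory Submission
  imports Defs
begin


abbreviation SS :: "nat pmf \<Rightarrow> nat stream measure" where
  "SS D \<equiv> stream_space (measure_pmf D)"

lemma ps_SS: "prob_space (SS D)"
  by (rule prob_space.prob_space_stream_space) (rule prob_space_measure_pmf)

lemma sets_SS: "sets (SS D) = sets (stream_space (count_space UNIV))"
  by (rule sets_stream_space_cong) simp

lemma meas_stake: "stake n \<in> measurable (SS D) (count_space UNIV)"
  using measurable_stake[of n] by (simp add: measurable_cong_sets[OF sets_SS refl])

lemma meas_fstake[measurable]: "(\<lambda>\<omega>. g (stake n \<omega>) :: ennreal) \<in> borel_measurable (SS D)"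
  by (rule measurable_compose[OF meas_stake]) simp

primrec Lp :: "nat pmf \<Rightarrow> nat \<Rightarrow> nat list pmf" where
  "Lp D 0 = return_pmf []"
| "Lp D (Suc n) = bind_pmf D (\<lambda>x. map_pmf ((#) x) (Lp D n))"

lemma split_int:
  assumes "\<And>xs. h xs \<in> borel_measurable (SS D)"
  shows "(\<integral>\<^sup>+\<omega>. h (stake n \<omega>) (sdrop n \<omega>) \<partial>SS D) = (\<integral>\<^sup>+xs. \<integral>\<^sup>+\<omega>. h xs \<omega> \<partial>SS D \<partial>Lp D n)"
  using assms
proof (induction n arbitrary: h)
  case 0
  then show ?case by simp
next
  case (Suc n)
  have m: "(\<lambda>\<omega>. h (stake (Suc n) \<omega>) (sdrop (Suc n) \<omega>)) \<in> borel_measurable (SS D)"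
    by (rule measurable_compose_countable[OF _ meas_stake])
       (rule measurable_compose[OF measurable_sdrop Suc.prems])
  have "(\<integral>\<^sup>+\<omega>. h (stake (Suc n) \<omega>) (sdrop (Suc n) \<omega>) \<partial>SS D)
      = (\<integral>\<^sup>+x. \<integral>\<^sup>+\<omega>. h (x # stake n \<omega>) (sdrop n \<omega>) \<partial>SS D \<partial>D)"
    by (subst prob_space.nn_integral_stream_space[OF prob_space_measure_pmf m]) simp
  also have "\<dots> = (\<integral>\<^sup>+x. \<integral>\<^sup>+xs. \<integral>\<^sup>+\<omega>. h (x # xs) \<omega> \<partial>SS D \<partial>Lp D n \<partial>D)"
    by (intro nn_integral_cong Suc.IH Suc.prems)
  also have "\<dots> = (\<integral>\<^sup>+xs. \<integral>\<^sup>+\<omega>. h xs \<omega> \<partial>SS D \<partial>Lp D (Suc n))"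
    by simp
  finally show ?case .
qed

lemma int_const_SS: "(\<integral>\<^sup>+\<omega>. c \<partial>SS D) = c"
  using prob_space.emeasure_space_1[OF ps_SS] by simp

lemma int_stake:
  "(\<integral>\<^sup>+\<omega>. f (stake n \<omega>) \<partial>SS D) = (\<integral>\<^sup>+xs. f xs \<partial>Lp D n)"
proof -
  have "(\<integral>\<^sup>+\<omega>. f (stake n \<omega>) \<partial>SS D) = (\<integral>\<^sup>+xs. \<integral>\<^sup>+\<omega>. f xs \<partial>SS D \<partial>Lp D n)"
    by (rule split_int[where h="\<lambda>xs \<omega>. f xs"]) simp
  also have "\<dots> = (\<integral>\<^sup>+xs. f xs \<partial>Lp D n)" by (simp only: int_const_SS)
  finally show ?thesis .
qed

lemma prod_int:
  assumes g: "g \<in> borel_measurable (SS D)"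
  shows "(\<integral>\<^sup>+\<omega>. f (stake n \<omega>) * g (sdrop n \<omega>) \<partial>SS D)
       = (\<integral>\<^sup>+\<omega>. f (stake n \<omega>) \<partial>SS D) * (\<integral>\<^sup>+\<omega>. g \<omega> \<partial>SS D)"
proof -
  have "(\<integral>\<^sup>+\<omega>. f (stake n \<omega>) * g (sdrop n \<omega>) \<partial>SS D)
      = (\<integral>\<^sup>+xs. \<integral>\<^sup>+\<omega>. f xs * g \<omega> \<partial>SS D \<partial>Lp D n)"
    by (rule split_int[where h="\<lambda>xs \<omega>. f xs * g \<omega>"]) (use g in measurable)
  also have "\<dots> = (\<integral>\<^sup>+xs. f xs * (\<integral>\<^sup>+\<omega>. g \<omega> \<partial>SS D) \<partial>Lp D n)"
    by (rule nn_integral_cong, rule nn_integral_cmult, rule g)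
  also have "\<dots> = (\<integral>\<^sup>+xs. f xs \<partial>Lp D n) * (\<integral>\<^sup>+\<omega>. g \<omega> \<partial>SS D)"
    by (rule nn_integral_multc) simp
  finally show ?thesis by (simp only: int_stake)
qed

lemma prob_word:
  "(\<integral>\<^sup>+xs. indicator {ys} xs \<partial>Lp D (length ys)) = ennreal (prod_list (map (pmf D) ys))"
proof (induction ys)
  case Nil
  then show ?case by simp
next
  case (Cons y ys)
  have "(\<integral>\<^sup>+xs. indicator {y#ys} xs \<partial>Lp D (length (y#ys)))
     = (\<integral>\<^sup>+x. \<integral>\<^sup>+xs. indicator {y#ys} (x#xs) \<partial>Lp D (length ys) \<partial>D)" by simp
  also have "\<dots> = (\<integral>\<^sup>+x. indicator {y} x * (\<integral>\<^sup>+xs. indicator {ys} xs \<partial>Lp D (length ys)) \<partial>D)"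
    by (intro nn_integral_cong) (auto simp: indicator_def)
  also have "\<dots> = emeasure D {y} * ennreal (prod_list (map (pmf D) ys))"
    by (subst nn_integral_multc) (auto simp: Cons.IH)
  also have "\<dots> = ennreal (prod_list (map (pmf D) (y#ys)))"
    by (simp add: emeasure_pmf_single ennreal_mult')
  finally show ?case .
qed

lemma prob_stake:
  "(\<integral>\<^sup>+\<omega>. indicator {ys} (stake (length ys) \<omega>) \<partial>SS D) = ennreal (prod_list (map (pmf D) ys))"
  by (simp only: int_stake prob_word)



definition occ :: "nat list \<Rightarrow> nat stream \<Rightarrow> nat \<Rightarrow> bool" where
  "occ S \<omega> t \<longleftrightarrow> length S \<le> t \<and> stake (length S) (sdrop (t - length S) \<omega>) = S"

definition nocc :: "nat list \<Rightarrow> nat list \<Rightarrow> bool" where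
  "nocc S xs \<longleftrightarrow> (\<forall>t. length S \<le> t \<and> t \<le> length xs \<longrightarrow> take (length S) (drop (t - length S) xs) \<noteq> S)"

definition fo :: "nat list \<Rightarrow> nat list \<Rightarrow> bool" where
  "fo S xs \<longleftrightarrow> length S \<le> length xs \<and> drop (length xs - length S) xs = S \<and>
     (\<forall>t. length S \<le> t \<and> t < length xs \<longrightarrow> take (length S) (drop (t - length S) xs) \<noteq> S)"

definition J :: "nat list \<Rightarrow> nat set" where
  "J S = {j\<in>{1..length S}. take j S = drop (length S - j) S}"

lemma occ_stake:
  assumes "t \<le> n" "length S \<le> t"
  shows "take (length S) (drop (t - length S) (stake n \<omega>)) = stake (length S) (sdrop (t - length S) \<omega>)"
proof -
  have "min (length S) (n - (t - length S)) = length S" using assms by auto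
  then show ?thesis by (simp add: drop_stake take_stake)
qed

lemma nocc_iff: "nocc S (stake n \<omega>) \<longleftrightarrow> (\<forall>t\<le>n. \<not> occ S \<omega> t)"
proof
  assume a: "nocc S (stake n \<omega>)"
  show "\<forall>t\<le>n. \<not> occ S \<omega> t"
  proof (intro allI impI notI)
    fix t assume "t \<le> n" "occ S \<omega> t"
    then show False using a occ_stake[of t n S \<omega>] unfolding nocc_def occ_def by auto
  qed
next
  assume a: "\<forall>t\<le>n. \<not> occ S \<omega> t"
  show "nocc S (stake n \<omega>)" unfolding nocc_def
  proof (intro allI impI)
    fix t assume "length S \<le> t \<and> t \<le> length (stake n \<omega>)"
    then show "take (length S) (drop (t - length S) (stake n \<omega>)) \<noteq> S"
      using a occ_stake[of t n S \<omega>] unfolding occ_def by auto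
  qed
qed

lemma fo_iff: "fo S (stake t \<omega>) \<longleftrightarrow> occ S \<omega> t \<and> (\<forall>t'<t. \<not> occ S \<omega> t')"
  unfolding fo_def occ_def using occ_stake[of _ t S \<omega>] 
  by (auto simp: drop_stake)

lemma stake_eq_iff: "stake k (sdrop a \<omega>) = S \<longleftrightarrow> length S = k \<and> (\<forall>i<k. \<omega> !! (a+i) = S!i)"
  by (auto simp: list_eq_iff_nth_eq sdrop_snth)

lemma core_a:
  assumes S: "S \<noteq> []" and no: "\<forall>t\<le>n. \<not> occ S \<omega> t" and st: "stake (length S) (sdrop n \<omega>) = S"
  shows "\<exists>j\<in>J S. occ S \<omega> (n+j) \<and> (\<forall>t'<n+j. \<not> occ S \<omega> t') \<and>
           stake (length S - j) (sdrop (n+j) \<omega>) = drop j S"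
proof -
  define k where "k = length S"
  have H1: "\<forall>i<k. \<omega> !! (n+i) = S!i" using st stake_eq_iff k_def by metis
  have o: "occ S \<omega> (n+k)" using st by (simp add: occ_def k_def)
  define T where "T = (LEAST t. occ S \<omega> t)"
  have oT: "occ S \<omega> T" using o unfolding T_def by (rule LeastI)
  have Tle: "T \<le> n+k" using o unfolding T_def by (rule Least_le)
  have bef: "\<forall>t'<T. \<not> occ S \<omega> t'" unfolding T_def using not_less_Least by blast
  have Tn: "n < T" using no oT by (meson not_less)
  define j where "j = T - n"
  have j1: "1 \<le> j" "j \<le> k" using Tn Tle j_def by auto
  have kT: "k \<le> T" and H2: "\<forall>i<k. \<omega> !! (T-k+i) = S!i"
    using oT unfolding occ_def k_def[symmetric] stake_eq_iff by auto
  have tj: "take j S = drop (k-j) S"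
  proof (rule nth_equalityI)
    show "length (take j S) = length (drop (k - j) S)" using j1 k_def by simp
  next
    fix i assume "i < length (take j S)"
    then have i: "i < j" using j1 k_def by simp
    have "take j S ! i = S ! i" using i by simp
    also have "\<dots> = \<omega> !! (n+i)" using H1 i j1 by simp
    also have "\<dots> = \<omega> !! (T-k+(k-j+i))" using i j1 kT Tn j_def by (simp add: algebra_simps)
    also have "\<dots> = S ! (k-j+i)" using H2[rule_format, of "k-j+i"] i j1 by simp
    also have "\<dots> = drop (k-j) S ! i" using i j1 k_def by simp
    finally show "take j S ! i = drop (k - j) S ! i" .
  qed
  have jJ: "j \<in> J S" using j1 tj unfolding J_def k_def by auto
  have "stake (length S - j) (sdrop (n+j) \<omega>) = drop j S"
    unfolding stake_eq_iff using H1 j1 k_def by (auto simp: add.assoc)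
  moreover have "n + j = T" using j_def Tn by simp
  ultimately show ?thesis using jJ oT bef by auto
qed

lemma core_b:
  assumes jJ: "j \<in> J S" and oj: "occ S \<omega> (n+j)" and bef: "\<forall>t'<n+j. \<not> occ S \<omega> t'"
    and st: "stake (length S - j) (sdrop (n+j) \<omega>) = drop j S"
  shows "(\<forall>t\<le>n. \<not> occ S \<omega> t) \<and> stake (length S) (sdrop n \<omega>) = S"
proof -
  define k where "k = length S"
  have j1: "1 \<le> j" "j \<le> k" and tj: "take j S = drop (k-j) S" using jJ unfolding J_def k_def by auto
  have kT: "k \<le> n+j" and H2: "\<forall>i<k. \<omega> !! (n+j-k+i) = S!i"
    using oj unfolding occ_def k_def[symmetric] stake_eq_iff by auto
  have H3: "\<forall>i<k-j. \<omega> !! (n+j+i) = S!(j+i)"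
    using st j1 unfolding stake_eq_iff k_def by auto
  have "\<forall>i<k. \<omega> !! (n+i) = S!i"
  proof (intro allI impI)
    fix i assume i: "i < k"
    show "\<omega> !! (n+i) = S!i"
    proof (cases "i < j")
      case True
      have "\<omega> !! (n+i) = \<omega> !! (n+j-k+(k-j+i))" using True j1 kT by (simp add: algebra_simps)
      also have "\<dots> = S ! (k-j+i)" using H2[rule_format, of "k-j+i"] True j1 by simp
      also have "\<dots> = drop (k-j) S ! i" using True j1 k_def by simp
      also have "\<dots> = take j S ! i" using tj by simp
      also have "\<dots> = S ! i" using True by simp
      finally show ?thesis .
    next
      case False
      then have "\<omega> !! (n+i) = \<omega> !! (n+j+(i-j))" by simp
      also have "\<dots> = S!(j+(i-j))" using H3[rule_format, of "i-j"] False i by (simp only: add.assoc)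
      finally show ?thesis using False by simp
    qed
  qed
  then have "stake (length S) (sdrop n \<omega>) = S" unfolding stake_eq_iff k_def by simp
  moreover have "\<forall>t\<le>n. \<not> occ S \<omega> t" using bef j1 by auto
  ultimately show ?thesis by simp
qed

lemma sum_unique_ind:
  assumes "finite A" "\<And>j. j \<in> A \<Longrightarrow> P j \<Longrightarrow> L"
    "L \<Longrightarrow> \<exists>j\<in>A. P j" "\<And>j j'. j \<in> A \<Longrightarrow> j' \<in> A \<Longrightarrow> P j \<Longrightarrow> P j' \<Longrightarrow> j = j'"
  shows "(\<Sum>j\<in>A. if P j then 1 else 0 :: ennreal) = (if L then 1 else 0)"
proof (cases L)
  case True
  then obtain j0 where j0: "j0 \<in> A" "P j0" using assms(3) by blast
  have "(\<Sum>j\<in>A. if P j then 1 else 0 :: ennreal) = (\<Sum>j\<in>A. if j = j0 then 1 else 0)"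
    using j0 assms(4) by (intro sum.cong) auto
  also have "\<dots> = 1" using j0 assms(1) by simp
  finally show ?thesis using True by simp
next
  case False
  then show ?thesis using assms(2) by (auto intro!: sum.neutral)
qed

lemma pointwise:
  assumes S: "S \<noteq> []"
  shows "(if nocc S (stake n \<omega>) \<and> stake (length S) (sdrop n \<omega>) = S then 1 else 0 :: ennreal)
   = (\<Sum>j\<in>J S. if fo S (stake (n+j) \<omega>) \<and> stake (length S - j) (sdrop (n+j) \<omega>) = drop j S then 1 else 0)"
proof (rule sum_unique_ind[symmetric])
  show "finite (J S)" unfolding J_def by simp
next
  fix j assume "j \<in> J S" "fo S (stake (n + j) \<omega>) \<and> stake (length S - j) (sdrop (n + j) \<omega>) = drop j S"
  then show "nocc S (stake n \<omega>) \<and> stake (length S) (sdrop n \<omega>) = S"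
    using core_b[of j S \<omega> n] by (auto simp: fo_iff nocc_iff)
next
  assume "nocc S (stake n \<omega>) \<and> stake (length S) (sdrop n \<omega>) = S"
  then show "\<exists>j\<in>J S. fo S (stake (n + j) \<omega>) \<and> stake (length S - j) (sdrop (n + j) \<omega>) = drop j S"
    using core_a[OF S, of n \<omega>] by (auto simp: fo_iff nocc_iff)
next
  fix j j' assume "fo S (stake (n + j) \<omega>) \<and> stake (length S - j) (sdrop (n + j) \<omega>) = drop j S"
    "fo S (stake (n + j') \<omega>) \<and> stake (length S - j') (sdrop (n + j') \<omega>) = drop j' S"
  then show "j = j'" unfolding fo_iff by (metis linorder_neqE_nat add_less_cancel_left)
qed



lemma prod_list_pos: "(\<forall>x\<in>set S. pmf D x > 0) \<Longrightarrow> prod_list (map (pmf D) S) > 0"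
  by (induction S) auto

lemma W:
  "waiting_time S \<omega> = (\<Sum>n. if nocc S (stake n \<omega>) then 1 else 0 :: ennreal)"
proof (cases "\<exists>t. occ S \<omega> t")
  case True
  define T where "T = (LEAST t. occ S \<omega> t)"
  have oT: "occ S \<omega> T" using True unfolding T_def by (metis LeastI)
  have iff: "nocc S (stake n \<omega>) \<longleftrightarrow> n < T" for n
    unfolding nocc_iff using oT not_less_Least[of _ "occ S \<omega>"] T_def
    by (metis le_less_trans linorder_not_le)
  have "(\<Sum>n. if nocc S (stake n \<omega>) then 1 else 0 :: ennreal) = (\<Sum>n<T. if nocc S (stake n \<omega>) then 1 else 0)"
    by (rule suminf_finite) (auto simp: iff)
  also have "\<dots> = of_nat T" by (simp add: iff)
  finally show ?thesis using True unfolding waiting_time_def occ_def[abs_def] T_def by simp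
next
  case False
  then have "nocc S (stake n \<omega>)" for n by (simp add: nocc_iff)
  then have "(\<Sum>n. if nocc S (stake n \<omega>) then 1 else 0 :: ennreal) = (\<Sum>n. 1)" by simp
  also have "\<dots> = top" using suminf_eq_SUP[of "\<lambda>_. (1::ennreal)"] ennreal_SUP_of_nat_eq_top by simp
  finally show ?thesis using False unfolding waiting_time_def occ_def[abs_def] by simp
qed

lemma fo_unique: "fo S (stake t \<omega>) \<Longrightarrow> fo S (stake t' \<omega>) \<Longrightarrow> t = t'"
  unfolding fo_iff by (metis linorder_neqE_nat)

lemma union_fo:
  assumes "j \<le> length S"
  shows "{\<omega>. \<exists>n. fo S (stake (n+j) \<omega>)} = {\<omega>. \<exists>t. occ S \<omega> t}"
proof safe
  fix \<omega> n assume "fo S (stake (n+j) \<omega>)" then show "\<exists>t. occ S \<omega> t" by (auto simp: fo_iff)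
next
  fix \<omega> t assume o: "occ S \<omega> t"
  define T where "T = (LEAST t. occ S \<omega> t)"
  have oT: "occ S \<omega> T" using o unfolding T_def by (rule LeastI)
  have "fo S (stake T \<omega>)" unfolding fo_iff using oT not_less_Least[of _ "occ S \<omega>"] T_def by blast
  moreover have "j \<le> T" using oT assms by (simp add: occ_def)
  ultimately have "fo S (stake ((T - j) + j) \<omega>)" by simp
  then show "\<exists>n. fo S (stake (n+j) \<omega>)" by blast
qed

lemma sets_stake_pred: "{\<omega>\<in>space (SS D). P (stake t \<omega>)} \<in> sets (SS D)"
proof -
  have "{\<omega>\<in>space (SS D). P (stake t \<omega>)} = stake t -` {xs. P xs} \<inter> space (SS D)" by auto
  also have "\<dots> \<in> sets (SS D)" by (rule measurable_sets[OF meas_stake]) simp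
  finally show ?thesis .
qed

lemma int_pred: "(\<integral>\<^sup>+\<omega>. (if P (stake t \<omega>) then 1 else 0) \<partial>SS D) = emeasure (SS D) {\<omega>\<in>space (SS D). P (stake t \<omega>)}"
proof -
  have "(\<integral>\<^sup>+\<omega>. (if P (stake t \<omega>) then 1 else 0) \<partial>SS D) = (\<integral>\<^sup>+\<omega>. indicator {\<omega>\<in>space (SS D). P (stake t \<omega>)} \<omega> \<partial>SS D)"
    by (rule nn_integral_cong) (auto simp: indicator_def)
  also have "\<dots> = emeasure (SS D) {\<omega>\<in>space (SS D). P (stake t \<omega>)}"
    by (rule nn_integral_indicator[OF sets_stake_pred])
  finally show ?thesis .
qed

theorem conway:
  assumes S: "S \<noteq> []" and pos: "\<forall>x\<in>set S. pmf D x > 0"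
  shows "expected_wait D S = ennreal (\<Sum>j\<in>J S. 1 / prod_list (map (pmf D) (take j S)))"
proof -
  define k where "k = length S"
  define P where "P xs = prod_list (map (pmf D) xs)" for xs
  define Q where "Q n \<omega> = (if nocc S (stake n \<omega>) then 1 else 0 :: ennreal)" for n \<omega>
  define F where "F t = (\<integral>\<^sup>+\<omega>. (if fo S (stake t \<omega>) then 1 else 0) \<partial>SS D)" for t
  define A where "A t = {\<omega>\<in>space (SS D). fo S (stake t \<omega>)}" for t
  define B where "B = {\<omega>\<in>space (SS D). \<exists>t. occ S \<omega> t}"
  define c where "c = emeasure (SS D) B"
  define E where "E = expected_wait D S"
  define PS where "PS = ennreal (P S)"
  have Ppos: "P xs > 0" if "set xs \<subseteq> set S" for xs
    unfolding P_def using pos that by (intro prod_list_pos) auto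
  have Pnn: "0 \<le> P xs" for xs unfolding P_def by (rule prod_list_nonneg) auto
  have JS: "J S \<subseteq> {1..k}" unfolding J_def k_def by auto
  have finJ: "finite (J S)" using JS finite_subset by blast
  have ps: "prob_space (SS D)" by (rule ps_SS)
  have mQ: "Q n \<in> borel_measurable (SS D)" for n unfolding Q_def by simp
  have Wf: "waiting_time S = (\<lambda>\<omega>. \<Sum>n. Q n \<omega>)" by (rule ext) (simp add: W Q_def)
  have E1: "E = (\<Sum>n. integral\<^sup>N (SS D) (Q n))"
    unfolding E_def expected_wait_def Wf by (rule nn_integral_suminf[OF mQ])
  have PSv: "(\<integral>\<^sup>+\<omega>. indicator {ys} (stake (length ys) \<omega>) \<partial>SS D) = ennreal (P ys)" for ys
    unfolding P_def by (rule prob_stake)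
  have FA: "F t = emeasure (SS D) (A t)" for t unfolding F_def A_def by (rule int_pred)
  have ident: "integral\<^sup>N (SS D) (Q n) * PS = (\<Sum>j\<in>J S. F (n+j) * ennreal (P (drop j S)))" for n
  proof -
    have "integral\<^sup>N (SS D) (Q n) * PS
        = (\<integral>\<^sup>+\<omega>. (if nocc S (stake n \<omega>) then 1 else 0) * indicator {S} (stake (length S) (sdrop n \<omega>)) \<partial>SS D)"
      unfolding PS_def PSv[symmetric] Q_def by (rule prod_int[symmetric]) simp
    also have "\<dots> = (\<integral>\<^sup>+\<omega>. (\<Sum>j\<in>J S. (if fo S (stake (n+j) \<omega>) then 1 else 0) *
            indicator {drop j S} (stake (length (drop j S)) (sdrop (n+j) \<omega>))) \<partial>SS D)"
    proof (rule nn_integral_cong)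
      fix \<omega>
      have "(if nocc S (stake n \<omega>) then 1 else 0) * indicator {S} (stake (length S) (sdrop n \<omega>))
          = (if nocc S (stake n \<omega>) \<and> stake (length S) (sdrop n \<omega>) = S then 1 else 0 :: ennreal)"
        by (simp add: indicator_def)
      also have "\<dots> = (\<Sum>j\<in>J S. if fo S (stake (n+j) \<omega>) \<and> stake (length S - j) (sdrop (n+j) \<omega>) = drop j S then 1 else 0)"
        by (rule pointwise[OF S])
      also have "\<dots> = (\<Sum>j\<in>J S. (if fo S (stake (n+j) \<omega>) then 1 else 0) *
            indicator {drop j S} (stake (length (drop j S)) (sdrop (n+j) \<omega>)))"
        by (intro sum.cong) (auto simp: indicator_def)
      finally show "(if nocc S (stake n \<omega>) then 1 else 0) * indicator {S} (stake (length S) (sdrop n \<omega>)) = \<dots>" .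
    qed
    also have "\<dots> = (\<Sum>j\<in>J S. \<integral>\<^sup>+\<omega>. (if fo S (stake (n+j) \<omega>) then 1 else 0) *
            indicator {drop j S} (stake (length (drop j S)) (sdrop (n+j) \<omega>)) \<partial>SS D)"
    proof (rule nn_integral_sum)
      fix j
      show "(\<lambda>\<omega>. (if fo S (stake (n+j) \<omega>) then 1 else 0) *
            indicator {drop j S} (stake (length (drop j S)) (sdrop (n+j) \<omega>))) \<in> borel_measurable (SS D)"
        by (rule measurable_compose_countable[OF _ meas_stake[of "n+j"]], rule measurable_compose[OF measurable_sdrop]) simp
    qed
    also have "\<dots> = (\<Sum>j\<in>J S. F (n+j) * ennreal (P (drop j S)))"
    proof (rule sum.cong[OF refl])
      fix j
      show "(\<integral>\<^sup>+\<omega>. (if fo S (stake (n+j) \<omega>) then 1 else 0) *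
            indicator {drop j S} (stake (length (drop j S)) (sdrop (n+j) \<omega>)) \<partial>SS D) = F (n+j) * ennreal (P (drop j S))"
        unfolding F_def PSv[symmetric] by (rule prod_int) simp
    qed
    finally show ?thesis .
  qed
  have disj: "disjoint_family (\<lambda>n. A (n+j))" for j
    unfolding disjoint_family_on_def A_def using fo_unique by fastforce
  have AB: "(\<Union>n. A (n+j)) = B" if "j \<le> k" for j
    using union_fo[of j S] that unfolding A_def B_def k_def by blast
  have sumF: "(\<Sum>n. F (n+j)) = c" if "j \<le> k" for j
  proof -
    have "(\<Sum>n. F (n+j)) = (\<Sum>n. emeasure (SS D) (A (n+j)))" by (simp add: FA)
    also have "\<dots> = emeasure (SS D) (\<Union>n. A (n+j))"
      by (rule suminf_emeasure[OF _ disj]) (auto simp: A_def sets_stake_pred)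
    finally show ?thesis using AB[OF that] c_def by simp
  qed
  have Bsets: "B \<in> sets (SS D)"
  proof -
    have "(\<Union>n. A (n+k)) \<in> sets (SS D)" by (auto simp: A_def sets_stake_pred)
    then show ?thesis using AB[of k] by simp
  qed
  define \<Sigma> where "\<Sigma> = (\<Sum>j\<in>J S. ennreal (P (drop j S)))"
  have key: "E * PS = c * \<Sigma>"
  proof -
    have "E * PS = (\<Sum>n. integral\<^sup>N (SS D) (Q n) * PS)" by (simp add: E1)
    also have "\<dots> = (\<Sum>n. \<Sum>j\<in>J S. F (n+j) * ennreal (P (drop j S)))" by (simp add: ident)
    also have "\<dots> = (\<Sum>j\<in>J S. \<Sum>n. F (n+j) * ennreal (P (drop j S)))"
      by (rule suminf_sum) (rule summableI)
    also have "\<dots> = (\<Sum>j\<in>J S. c * ennreal (P (drop j S)))"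
    proof (rule sum.cong[OF refl])
      fix j assume "j \<in> J S"
      then have "j \<le> k" using JS by auto
      then show "(\<Sum>n. F (n+j) * ennreal (P (drop j S))) = c * ennreal (P (drop j S))"
        using sumF by simp
    qed
    also have "\<dots> = c * \<Sigma>" unfolding \<Sigma>_def by (simp add: sum_distrib_left)
    finally show ?thesis .
  qed
  have PS0: "PS \<noteq> 0" "PS \<noteq> top" unfolding PS_def using Ppos[of S] by auto
  have c1: "c \<le> 1" unfolding c_def by (rule prob_space.emeasure_le_1[OF ps])
  have \<Sigma>fin: "\<Sigma> \<noteq> top" 
  proof -
    have "\<And>j. j \<in> J S \<Longrightarrow> 0 \<le> P (drop j S)"
      unfolding P_def by (rule prod_list_nonneg) auto
    then have "\<Sigma> = ennreal (\<Sum>j\<in>J S. P (drop j S))" unfolding \<Sigma>_def by (rule sum_ennreal)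
    then show ?thesis by simp
  qed
  have cfin: "c \<noteq> top" using c1 by (metis ennreal_one_neq_top top_unique)
  have Efin: "E \<noteq> top"
  proof
    assume "E = top"
    then have "E * PS = top" using PS0 by (simp add: ennreal_mult_eq_top_iff)
    then show False using key \<Sigma>fin cfin by (simp add: ennreal_mult_eq_top_iff)
  qed
  have mW: "(\<lambda>\<omega>. \<Sum>n. Q n \<omega>) \<in> borel_measurable (SS D)" using mQ by measurable
  have int_eq: "integral\<^sup>N (SS D) (\<lambda>\<omega>. \<Sum>n. Q n \<omega>) = E"
    unfolding E_def expected_wait_def Wf ..
  have "AE \<omega> in SS D. (\<Sum>n. Q n \<omega>) \<noteq> \<infinity>"
    by (rule nn_integral_PInf_AE[OF mW]) (use Efin in \<open>simp only: int_eq infinity_ennreal_def, simp\<close>)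
  then have "AE \<omega> in SS D. \<omega> \<in> B"
  proof (rule AE_mp, intro AE_I2 impI)
    fix \<omega> assume sp: "\<omega> \<in> space (SS D)" and fin: "(\<Sum>n. Q n \<omega>) \<noteq> \<infinity>"
    have "waiting_time S \<omega> \<noteq> \<infinity>" using fin by (simp add: Wf)
    then have "\<exists>t. occ S \<omega> t" unfolding waiting_time_def occ_def by (auto split: if_splits)
    then show "\<omega> \<in> B" using sp unfolding B_def by blast
  qed
  then have "c = 1" unfolding c_def
    using prob_space.AE_in_set_eq_1[OF ps Bsets] finite_measure.emeasure_eq_measure[OF prob_space.axioms(1)[OF ps]] by simp
  then have EPS: "E * PS = \<Sigma>" using key by simp
  define R where "R = (\<Sum>j\<in>J S. 1 / P (take j S))"
  have "ennreal R * PS = \<Sigma>"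
  proof -
    have "ennreal R * PS = ennreal (R * P S)" unfolding PS_def R_def
      by (rule ennreal_mult''[symmetric]) (use Ppos[of S] in simp)
    also have "R * P S = (\<Sum>j\<in>J S. P (drop j S))" unfolding R_def sum_distrib_right
    proof (rule sum.cong[OF refl])
      fix j
      have "P S = P (take j S) * P (drop j S)"
        unfolding P_def by (metis append_take_drop_id map_append prod_list.append)
      moreover have "P (take j S) > 0" by (rule Ppos) (meson set_take_subset)
      ultimately show "1 / P (take j S) * P S = P (drop j S)" by simp
    qed
    also have "ennreal \<dots> = \<Sigma>" unfolding \<Sigma>_def
      by (rule sum_ennreal[symmetric]) (rule Pnn)
    finally show ?thesis .
  qed
  then have "E = ennreal R" using EPS PS0 by (metis ennreal_mult_divide_eq)
  then show ?thesis unfolding E_def R_def P_def .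
qed



lemma nthS: "i < a + b \<Longrightarrow> (replicate a x @ replicate b y) ! i = (if i < a then x else y)"
  by (simp add: nth_append)

lemma two_runs:
  assumes xy: "x \<noteq> y" and a: "a \<ge> 1" and b: "b \<ge> 1"
  shows "overlaps (replicate a x @ replicate b y) = {replicate a x @ replicate b y}"
proof
  define S where "S = replicate a x @ replicate b y"
  show "{replicate a x @ replicate b y} \<subseteq> overlaps (replicate a x @ replicate b y)"
    using a unfolding overlaps_def by auto
  show "overlaps (replicate a x @ replicate b y) \<subseteq> {replicate a x @ replicate b y}"
  proof
    fix w assume "w \<in> overlaps (replicate a x @ replicate b y)"
    then have w0: "w \<noteq> []" and pw: "prefix w S" and sw: "suffix w S"
      unfolding overlaps_def S_def by auto
    obtain zs where zs: "S = w @ zs" using pw prefixE by metis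
    obtain us where us: "S = us @ w" using sw suffixE by metis
    define l where "l = length w"
    have lS: "length S = a + b" unfolding S_def by simp
    have l1: "1 \<le> l" using w0 l_def by (cases w) auto
    have lle: "l \<le> a + b" using zs lS l_def by (metis le_add1 length_append)
    have us_len: "length us = a + b - l" using us lS l_def by (metis add_diff_cancel_right' length_append)
    have P: "w ! i = S ! i" if "i < l" for i using zs that l_def by (simp add: nth_append)
    have Q: "w ! i = S ! (a + b - l + i)" if "i < l" for i
      using us that l_def us_len by (simp add: nth_append)
    show "w \<in> {replicate a x @ replicate b y}"
    proof (cases "l = a + b")
      case True
      then have "zs = []" using zs lS l_def by simp
      then show ?thesis using zs S_def by simp
    next
      case False
      then have lt: "l < a + b" using lle by simp
      have e1: "a + b - l + (l - 1) = a + b - 1" using l1 lt by simp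
      have e2: "\<not> a + b - 1 < a" using b by simp
      have "w ! (l - 1) = S ! (a + b - 1)" using Q[of "l-1"] l1 e1 by simp
      also have "\<dots> = y" using nthS[of "a + b - 1" a b x y] e2 a unfolding S_def by simp
      finally have "w ! (l - 1) = y" .
      then have sl: "S ! (l - 1) = y" using P[of "l-1"] l1 by simp
      have "\<not> l - 1 < a"
      proof
        assume "l - 1 < a"
        then have "S ! (l - 1) = x" using nthS[of "l-1" a b x y] lt unfolding S_def by simp
        then show False using sl xy by simp
      qed
      then have "a < l" using l1 by simp
      have "w ! (a - 1) = x" using P[of "a-1"] \<open>a < l\<close> a nthS[of "a - 1" a b x y] unfolding S_def by simp
      moreover have "w ! (a - 1) = y"
      proof -
        have e3: "\<not> a + b - l + (a - 1) < a" "a + b - l + (a - 1) < a + b" using lt \<open>a < l\<close> a by auto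
        have "w ! (a - 1) = S ! (a + b - l + (a - 1))" using Q[of "a-1"] \<open>a < l\<close> a by simp
        also have "\<dots> = y" using nthS[of "a + b - l + (a - 1)" a b x y] e3 unfolding S_def by simp
        finally show ?thesis .
      qed
      ultimately show ?thesis using xy by simp
    qed
  qed
qed

lemma prod_ge: "(\<forall>x\<in>set xs. p \<le> pmf D x) \<Longrightarrow> 0 \<le> p \<Longrightarrow> p ^ length xs \<le> prod_list (map (pmf D) xs)"
proof (induction xs)
  case Nil
  then show ?case by simp
next
  case (Cons x xs)
  then have h: "p \<le> pmf D x" "p ^ length xs \<le> prod_list (map (pmf D) xs)" by auto
  have "p * p ^ length xs \<le> pmf D x * prod_list (map (pmf D) xs)"
    by (rule mult_mono[OF h]) (use Cons.prems in auto)
  then show ?case by simp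
qed

lemma prod_const: "(\<forall>x\<in>set xs. pmf D x = q) \<Longrightarrow> prod_list (map (pmf D) xs) = q ^ length xs"
  by (induction xs) auto

lemma k_in_J: "S \<noteq> [] \<Longrightarrow> length S \<in> J S"
  unfolding J_def by (cases S) auto

lemma J_sub: "J S \<subseteq> {1..length S}" unfolding J_def by auto

lemma finite_words: "finite (words m k)"
proof -
  have "words m k = {xs. set xs \<subseteq> {1..m} \<and> length xs = k}" unfolding words_def by auto
  then show ?thesis using finite_lists_length_eq[of "{1..m}" k] by simp
qed

lemma J_overlap: "overlaps S = {S} \<Longrightarrow> S \<noteq> [] \<Longrightarrow> J S = {length S}"
proof -
  assume ov: "overlaps S = {S}" and S: "S \<noteq> []"
  have "j = length S" if j: "j \<in> J S" for j
  proof -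
    have j1: "1 \<le> j" "j \<le> length S" and tj: "take j S = drop (length S - j) S" using j unfolding J_def by auto
    have "prefix (take j S) S" by (rule take_is_prefix)
    moreover have "suffix (take j S) S" unfolding tj by (rule suffix_drop)
    moreover have "take j S \<noteq> []" using j1 S by simp
    ultimately have "take j S \<in> overlaps S" unfolding overlaps_def by simp
    then have tS: "take j S = S" using ov by simp
    have l1: "length (take j S) = j" using j1 by simp
    have l2: "length (take j S) = length S" using tS by (rule arg_cong)
    show ?thesis using l1 l2 by linarith
  qed
  then show ?thesis using k_in_J[OF S] by blast
qed

lemma step_id:
  fixes p q :: real
  assumes "p \<noteq> 0" "p \<noteq> 1" "q \<noteq> 0"
  shows "(1 - q) / ((1 - p) * q) + 1 / (p * q) = (1 - p * q) / ((1 - p) * (p * q))"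
proof -
  have nz: "1 - p \<noteq> 0" using assms by simp
  have "(1 - q) / ((1 - p) * q) = (p * (1 - q)) / ((1 - p) * (p * q))" using assms nz by simp
  moreover have "1 / (p * q) = (1 - p) / ((1 - p) * (p * q))" using assms nz by simp
  ultimately have "(1 - q) / ((1 - p) * q) + 1 / (p * q) = (p * (1 - q) + (1 - p)) / ((1 - p) * (p * q))"
    by (simp add: add_divide_distrib)
  also have "p * (1 - q) + (1 - p) = 1 - p * q" by (simp add: algebra_simps)
  finally show ?thesis .
qed

lemma sum_geom: "(p::real) \<noteq> 0 \<Longrightarrow> p \<noteq> 1 \<Longrightarrow> (\<Sum>j=1..k. 1 / p ^ j) = (1 - p ^ k) / ((1 - p) * p ^ k)"
proof (induction k)
  case 0
  then show ?case by simp
next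
  case (Suc k)
  have nz: "1 - p \<noteq> 0" "p ^ k \<noteq> 0" using Suc by auto
  have "(\<Sum>j=1..Suc k. 1 / p ^ j) = (\<Sum>j=1..k. 1 / p ^ j) + 1 / (p * p ^ k)" by simp
  also have "\<dots> = (1 - p ^ k) / ((1 - p) * p ^ k) + 1 / (p * p ^ k)" using Suc by simp
  also have "\<dots> = (1 - p * p ^ k) / ((1 - p) * (p * p ^ k))"
    using nz Suc.prems by (intro step_id) auto
  finally show ?case by simp
qed



lemma words_mem: "S \<in> words m k \<Longrightarrow> length S = k \<and> set S \<subseteq> {1..m}"
  unfolding words_def by auto

lemma E_formula:
  assumes "S \<in> words m k" "k \<ge> 1" "\<forall>j\<in>{1..m}. pmf D j > 0"
  shows "expected_wait D S = ennreal (\<Sum>j\<in>J S. 1 / prod_list (map (pmf D) (take j S)))"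
proof (rule conway)
  show "S \<noteq> []" using assms words_mem[OF assms(1)] by auto
  show "\<forall>x\<in>set S. 0 < pmf D x" using assms words_mem[OF assms(1)] by auto
qed

lemma part1:
  fixes D :: "nat pmf" and m k :: nat
  assumes m: "m \<ge> 1" and k: "k \<ge> 1" and pos: "\<forall>j\<in>{1..m}. pmf D j > 0"
    and p_def: "p = Min (pmf D ` {1..m})"
  shows "Max (expected_wait D ` words m k) = ennreal (\<Sum>j=1..k. 1 / p ^ j)"
    and "\<forall>i\<in>{1..m}. pmf D i = p \<longrightarrow> expected_wait D (replicate k i) = ennreal (\<Sum>j=1..k. 1 / p ^ j)"
    and "p > 0"
proof -
  have fin: "finite (pmf D ` {1..m})" and ne: "pmf D ` {1..m} \<noteq> {}" using m by auto
  have "p \<in> pmf D ` {1..m}" unfolding p_def using fin ne by (rule Min_in)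
  then obtain i0 where i0: "i0 \<in> {1..m}" "pmf D i0 = p" by auto
  show ppos: "p > 0" using i0 pos by auto
  have ple: "p \<le> pmf D j" if "j \<in> {1..m}" for j unfolding p_def using fin that by simp
  have Erep: "expected_wait D (replicate k i) = ennreal (\<Sum>j=1..k. 1 / p ^ j)"
    if i: "i \<in> {1..m}" "pmf D i = p" for i
  proof -
    have w: "replicate k i \<in> words m k" using i unfolding words_def by auto
    have JJ: "J (replicate k i) = {1..k}" unfolding J_def by auto
    have "(\<Sum>j\<in>J (replicate k i). 1 / prod_list (map (pmf D) (take j (replicate k i))))
        = (\<Sum>j=1..k. 1 / p ^ j)" unfolding JJ
    proof (rule sum.cong[OF refl])
      fix j assume "j \<in> {1..k}"
      then have "prod_list (map (pmf D) (take j (replicate k i))) = p ^ j"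
        using prod_const[of "take j (replicate k i)" D p] i by simp
      then show "1 / prod_list (map (pmf D) (take j (replicate k i))) = 1 / p ^ j" by simp
    qed
    then show ?thesis using E_formula[OF w k pos] by simp
  qed
  then show "\<forall>i\<in>{1..m}. pmf D i = p \<longrightarrow> expected_wait D (replicate k i) = ennreal (\<Sum>j=1..k. 1 / p ^ j)"
    by blast
  have bound: "expected_wait D S \<le> ennreal (\<Sum>j=1..k. 1 / p ^ j)" if S: "S \<in> words m k" for S
  proof -
    have lS: "length S = k" and sS: "set S \<subseteq> {1..m}" using words_mem[OF S] by auto
    have "(\<Sum>j\<in>J S. 1 / prod_list (map (pmf D) (take j S))) \<le> (\<Sum>j\<in>J S. 1 / p ^ j)"
    proof (rule sum_mono)
      fix j assume j: "j \<in> J S"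
      then have jk: "j \<le> k" using J_sub[of S] lS by auto
      have "p ^ length (take j S) \<le> prod_list (map (pmf D) (take j S))"
        using sS ple ppos by (intro prod_ge) (auto dest: in_set_takeD)
      then have le: "p ^ j \<le> prod_list (map (pmf D) (take j S))" using jk lS by simp
      have "0 < p ^ j" using ppos by simp
      then show "1 / prod_list (map (pmf D) (take j S)) \<le> 1 / p ^ j"
        using le by (intro divide_left_mono) (auto intro: mult_pos_pos less_le_trans)
    qed
    also have "\<dots> \<le> (\<Sum>j=1..k. 1 / p ^ j)"
      using J_sub[of S] lS ppos by (intro sum_mono2) auto
    finally show ?thesis using E_formula[OF S k pos] by (simp add: ennreal_leI)
  qed
  show "Max (expected_wait D ` words m k) = ennreal (\<Sum>j=1..k. 1 / p ^ j)"
  proof (rule Max_eqI)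
    show "finite (expected_wait D ` words m k)" using finite_words by simp
    show "\<And>y. y \<in> expected_wait D ` words m k \<Longrightarrow> y \<le> ennreal (\<Sum>j=1..k. 1 / p ^ j)"
      using bound by auto
    have "replicate k i0 \<in> words m k" using i0 unfolding words_def by auto
    then show "ennreal (\<Sum>j=1..k. 1 / p ^ j) \<in> expected_wait D ` words m k"
      using Erep[OF i0] by (metis image_eqI)
  qed
qed

lemma part2:
  fixes D :: "nat pmf" and m k :: nat
  assumes k: "k \<ge> 1" and supp: "set_pmf D \<subseteq> {1..m}"
    and m1: "m > 1" and eq: "\<forall>j\<in>{1..m}. pmf D j = pmf D 1"
  shows "Min (expected_wait D ` words m k) = of_nat (m ^ k)"
    and "\<forall>S\<in>words m k. overlaps S = {S} \<longrightarrow> expected_wait D S = of_nat (m ^ k)"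
proof -
  have "(\<Sum>j\<in>{1..m}. pmf D j) = 1" by (rule sum_pmf_eq_1) (use supp in auto)
  moreover have "(\<Sum>j\<in>{1..m}. pmf D j) = (\<Sum>j\<in>{1..m}. pmf D 1)"
    by (rule sum.cong) (use eq in blast)+
  moreover have "(\<Sum>j\<in>{1..m}. pmf D 1) = real m * pmf D 1" by simp
  ultimately have qm: "real m * pmf D 1 = 1" by simp
  have m0: "real m \<noteq> 0" using m1 by simp
  have q: "pmf D 1 = 1 / real m" using qm m0 by (simp add: eq_divide_eq mult.commute)
  have pj: "pmf D j = 1 / real m" if "j \<in> {1..m}" for j
  proof -
    have "pmf D j = pmf D 1" using eq that by blast
    then show ?thesis using q by simp
  qed
  have pos: "\<forall>j\<in>{1..m}. pmf D j > 0" using pj m1 by simp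
  have Ef: "expected_wait D S = ennreal (\<Sum>j\<in>J S. real m ^ j)" if S: "S \<in> words m k" for S
  proof -
    have lS: "length S = k" and sS: "set S \<subseteq> {1..m}" using words_mem[OF S] by auto
    have "(\<Sum>j\<in>J S. 1 / prod_list (map (pmf D) (take j S))) = (\<Sum>j\<in>J S. real m ^ j)"
    proof (rule sum.cong[OF refl])
      fix j assume j: "j \<in> J S"
      then have jk: "j \<le> k" using J_sub[of S] lS by auto
      have "prod_list (map (pmf D) (take j S)) = (1 / real m) ^ length (take j S)"
        using sS pj by (intro prod_const) (auto dest: in_set_takeD)
      then show "1 / prod_list (map (pmf D) (take j S)) = real m ^ j"
        using jk lS by (simp add: power_one_over)
    qed
    then show ?thesis using E_formula[OF S k pos] by simp
  qed
  have ge: "of_nat (m ^ k) \<le> expected_wait D S" if S: "S \<in> words m k" for S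
  proof -
    have lS: "length S = k" using words_mem[OF S] by auto
    have Sne: "S \<noteq> []" using lS k by auto
    have finJ: "finite (J S)" using J_sub[of S] finite_subset by blast
    have "real m ^ k \<le> (\<Sum>j\<in>J S. real m ^ j)"
      using k_in_J[OF Sne] lS finJ by (intro member_le_sum) auto
    then show ?thesis using Ef[OF S] by (simp add: ennreal_of_nat_eq_real_of_nat ennreal_leI)
  qed
  have eqk: "expected_wait D S = of_nat (m ^ k)" if S: "S \<in> words m k" and ov: "overlaps S = {S}" for S
  proof -
    have lS: "length S = k" using words_mem[OF S] by auto
    have Sne: "S \<noteq> []" using lS k by auto
    have "J S = {k}" using J_overlap[OF ov Sne] lS by simp
    then show ?thesis using Ef[OF S] by (simp add: ennreal_of_nat_eq_real_of_nat)
  qed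
  then show "\<forall>S\<in>words m k. overlaps S = {S} \<longrightarrow> expected_wait D S = of_nat (m ^ k)" by blast
  obtain S0 where S0: "S0 \<in> words m k" "overlaps S0 = {S0}"
  proof (cases "k = 1")
    case True
    have "[1] \<in> words m k" using True m1 unfolding words_def by auto
    moreover have "overlaps [1::nat] = {[1]}" unfolding overlaps_def
      by (auto simp: prefix_Cons)
    ultimately show ?thesis using that by blast
  next
    case False
    then have k2: "k - 1 \<ge> 1" using k by simp
    have "replicate (k-1) 1 @ replicate 1 2 \<in> words m k" using k m1 unfolding words_def by auto
    moreover have "overlaps (replicate (k-1) (1::nat) @ replicate 1 2) = {replicate (k-1) 1 @ replicate 1 2}"
      by (rule two_runs) (use k2 in auto)
    ultimately show ?thesis using that by blast
  qed
  show "Min (expected_wait D ` words m k) = of_nat (m ^ k)"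
  proof (rule Min_eqI)
    show "finite (expected_wait D ` words m k)" using finite_words by simp
    show "\<And>y. y \<in> expected_wait D ` words m k \<Longrightarrow> of_nat (m ^ k) \<le> y" using ge by auto
    show "of_nat (m ^ k) \<in> expected_wait D ` words m k" using eqk[OF S0] S0(1) by (metis image_eqI)
  qed
qed

theorem corollary4p5:
  fixes D :: "nat pmf" and m k :: nat
  assumes m: "m \<ge> 1" and k: "k \<ge> 1"
    and supp: "set_pmf D \<subseteq> {1..m}"
  shows
    "((\<forall>j\<in>{1..m}. pmf D j > 0) \<longrightarrow>
       (let p = Min (pmf D ` {1..m}) in
         Max (expected_wait D ` words m k) = ennreal (\<Sum>j=1..k. 1 / p ^ j)
         \<and> (p \<noteq> 1 \<longrightarrow> (\<Sum>j=1..k. 1 / p ^ j) = (1 - p ^ k) / ((1 - p) * p ^ k))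
         \<and> (\<forall>i\<in>{1..m}. pmf D i = p \<longrightarrow>
               expected_wait D (replicate k i) = Max (expected_wait D ` words m k))))
     \<and>
     ((m > 1 \<and> (\<forall>j\<in>{1..m}. pmf D j = pmf D 1)) \<longrightarrow>
       Min (expected_wait D ` words m k) = of_nat (m ^ k)
       \<and> (\<forall>S\<in>words m k. overlaps S = {S} \<longrightarrow> expected_wait D S = of_nat (m ^ k))
       \<and> (\<forall>x\<in>{1..m}. \<forall>y\<in>{1..m}. \<forall>a b. x \<noteq> y \<and> a \<ge> 1 \<and> b \<ge> 1 \<and> a + b = k \<longrightarrow>
             overlaps (replicate a x @ replicate b y) = {replicate a x @ replicate b y}))"
proof (intro conjI impI)
  assume pos: "\<forall>j\<in>{1..m}. pmf D j > 0"
  define p where "p = Min (pmf D ` {1..m})"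
  note P = part1[OF m k pos p_def]
  have "Max (expected_wait D ` words m k) = ennreal (\<Sum>j=1..k. 1 / p ^ j)
         \<and> (p \<noteq> 1 \<longrightarrow> (\<Sum>j=1..k. 1 / p ^ j) = (1 - p ^ k) / ((1 - p) * p ^ k))
         \<and> (\<forall>i\<in>{1..m}. pmf D i = p \<longrightarrow>
               expected_wait D (replicate k i) = Max (expected_wait D ` words m k))"
    using P sum_geom[of p k] by auto
  then show "let p = Min (pmf D ` {1..m}) in
         Max (expected_wait D ` words m k) = ennreal (\<Sum>j=1..k. 1 / p ^ j)
         \<and> (p \<noteq> 1 \<longrightarrow> (\<Sum>j=1..k. 1 / p ^ j) = (1 - p ^ k) / ((1 - p) * p ^ k))
         \<and> (\<forall>i\<in>{1..m}. pmf D i = p \<longrightarrow>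
               expected_wait D (replicate k i) = Max (expected_wait D ` words m k))"
    unfolding Let_def p_def .
next
  assume h: "m > 1 \<and> (\<forall>j\<in>{1..m}. pmf D j = pmf D 1)"
  have m1: "m > 1" using h by (rule conjunct1)
  have eq: "\<forall>j\<in>{1..m}. pmf D j = pmf D 1" using h by (rule conjunct2)
  show "Min (expected_wait D ` words m k) = of_nat (m ^ k)" by (rule part2(1)[OF k supp m1 eq])
  show "\<forall>S\<in>words m k. overlaps S = {S} \<longrightarrow> expected_wait D S = of_nat (m ^ k)"
    by (rule part2(2)[OF k supp m1 eq])
  show "\<forall>x\<in>{1..m}. \<forall>y\<in>{1..m}. \<forall>a b. x \<noteq> y \<and> a \<ge> 1 \<and> b \<ge> 1 \<and> a + b = k \<longrightarrow>
             overlaps (replicate a x @ replicate b y) = {replicate a x @ replicate b y}"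
  proof (intro ballI allI impI)
    fix x y a b assume H: "x \<noteq> y \<and> a \<ge> 1 \<and> b \<ge> 1 \<and> a + b = k"
    then have "x \<noteq> y" "a \<ge> 1" "b \<ge> 1" by auto
    then show "overlaps (replicate a x @ replicate b y) = {replicate a x @ replicate b y}"
      by (rule two_runs)
  qed
qed

end
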